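(* Let $(A,B)$ be a random vector, $(A_n,B_n)_{n\in\mathbb N}$ i.i.d. copies, $X=\sum_{k\ge1}\Pi_{k-1}B_k$ with $|X|<\infty$ a.s., and suppose $\mathbb P\{A=-1\}>0$. Then for $r>0$, $\mathbb E e^{rX}<\infty$ if and only if $\mathbb E e^{r|X|}<\infty$.
   Context: $\Pi_0:=1$, $\Pi_n:=A_1\cdots A_n$. *)

theory Defs
  imports "HOL-Probability.Probability"
begin

definition Pi_prod :: "(nat \<Rightarrow> 'a \<Rightarrow> real) \<Rightarrow> nat \<Rightarrow> 'a \<Rightarrow> real" where
  "Pi_prod As n \<omega> = (\<Prod>j=1..n. As j \<omega>)"

definition perp_partial :: "(nat \<Rightarrow> 'a \<Rightarrow> real) \<Rightarrow> (nat \<Rightarrow> 'a \<Rightarrow> real) \<Rightarrow> nat \<Rightarrow> 'a \<Rightarrow> real" where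
  "perp_partial As Bs n \<omega> = (\<Sum>k=1..n. Pi_prod As (k - 1) \<omega> * Bs k \<omega>)"

end

theory Submission imports Defs begin

definition seqT :: "(nat \<Rightarrow> real \<times> real) \<Rightarrow> nat \<Rightarrow> real" where
  "seqT s n = (\<Sum>k<n. (\<Prod>j<k. fst (s j)) * snd (s k))"

definition Lf :: "(nat \<Rightarrow> real \<times> real) \<Rightarrow> real" where
  "Lf s = lim (seqT s)"

lemma seqT_Suc: "seqT s (Suc n) = snd (s 0) + fst (s 0) * seqT (\<lambda>i. s (Suc i)) n"
  unfolding seqT_def
  by (simp add: sum.lessThan_Suc_shift prod.lessThan_Suc_shift sum_distrib_left mult.assoc del: sum.lessThan_Suc prod.lessThan_Suc)

lemma perp_seqT: "perp_partial As Bs n \<omega> = seqT (\<lambda>i. (As (Suc i) \<omega>, Bs (Suc i) \<omega>)) n"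
proof (induction n)
  case 0 then show ?case by (simp add: perp_partial_def seqT_def)
next
  case (Suc n)
  have "Pi_prod As n \<omega> = (\<Prod>j<n. As (Suc j) \<omega>)"
    unfolding Pi_prod_def by (induction n) (simp_all add: prod.nat_ivl_Suc')
  then show ?case using Suc by (simp add: perp_partial_def seqT_def)
qed

lemma Lf_shift:
  assumes "fst (s 0) = -1" "seqT s \<longlonglongrightarrow> x"
  shows "x = snd (s 0) - Lf (\<lambda>i. s (Suc i))"
proof -
  have "(\<lambda>n. seqT s (Suc n)) \<longlonglongrightarrow> x" using assms(2) by (rule LIMSEQ_Suc)
  hence "(\<lambda>n. snd (s 0) - seqT s (Suc n)) \<longlonglongrightarrow> snd (s 0) - x" by (intro tendsto_intros)
  moreover have "(\<lambda>n. snd (s 0) - seqT s (Suc n)) = seqT (\<lambda>i. s (Suc i))"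
    using assms(1) by (simp add: seqT_Suc fun_eq_iff)
  ultimately have "seqT (\<lambda>i. s (Suc i)) \<longlonglongrightarrow> snd (s 0) - x" by simp
  hence "Lf (\<lambda>i. s (Suc i)) = snd (s 0) - x" unfolding Lf_def by (rule limI)
  thus ?thesis by simp
qed

lemma fst_comp_measI: "j \<in> I \<Longrightarrow> (\<lambda>x. fst (x j)) \<in> borel_measurable (PiM I (\<lambda>_. borel :: (real\<times>real) measure))"
proof -
  have "(fst :: real\<times>real \<Rightarrow> real) \<in> borel_measurable borel"
    by (rule borel_measurable_continuous_onI) (auto intro: continuous_intros)
  moreover assume "j \<in> I" hence "(\<lambda>x. x j) \<in> measurable (PiM I (\<lambda>_. borel :: (real\<times>real) measure)) borel"
    by (rule measurable_component_singleton)
  ultimately show ?thesis by (rule measurable_compose[rotated])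
qed

lemma fst_comp_meas: "(\<lambda>x. fst (x j)) \<in> borel_measurable (PiM UNIV (\<lambda>_. borel :: (real\<times>real) measure))"
  using fst_comp_measI[of j UNIV] by simp

lemma snd_comp_measI: "j \<in> I \<Longrightarrow> (\<lambda>x. snd (x j)) \<in> borel_measurable (PiM I (\<lambda>_. borel :: (real\<times>real) measure))"
proof -
  have "(snd :: real\<times>real \<Rightarrow> real) \<in> borel_measurable borel"
    by (rule borel_measurable_continuous_onI) (auto intro: continuous_intros)
  moreover assume "j \<in> I" hence "(\<lambda>x. x j) \<in> measurable (PiM I (\<lambda>_. borel :: (real\<times>real) measure)) borel"
    by (rule measurable_component_singleton)
  ultimately show ?thesis by (rule measurable_compose[rotated])
qed

lemma snd_comp_meas: "(\<lambda>x. snd (x j)) \<in> borel_measurable (PiM UNIV (\<lambda>_. borel :: (real\<times>real) measure))"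
  using snd_comp_measI[of j UNIV] by simp


lemma seqT_measurable[measurable]: "(\<lambda>s. seqT s n) \<in> borel_measurable (PiM UNIV (\<lambda>_. borel :: (real\<times>real) measure))"
  unfolding seqT_def using fst_comp_meas snd_comp_meas by measurable

lemma Lf_measurable[measurable]: "Lf \<in> borel_measurable (PiM UNIV (\<lambda>_. borel :: (real\<times>real) measure))"
  unfolding Lf_def by measurable

lemma (in prob_space) indep_var_nn_integral_mult:
  assumes "indep_var borel X borel Y" "\<And>\<omega>. 0 \<le> X \<omega>" "\<And>\<omega>. 0 \<le> Y \<omega>"
  shows "(\<integral>\<^sup>+\<omega>. ennreal (X \<omega> * Y \<omega>) \<partial>M) = (\<integral>\<^sup>+\<omega>. X \<omega> \<partial>M) * (\<integral>\<^sup>+\<omega>. Y \<omega> \<partial>M)"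
proof -
  have cb: "case_bool borel borel = (\<lambda>_::bool. borel :: ennreal measure)"
    by (rule ext) (simp split: bool.split)
  have "indep_var borel (ennreal \<circ> X) borel (ennreal \<circ> Y)"
    by (rule indep_var_compose[OF assms(1)]) auto
  hence "indep_vars (\<lambda>_. borel) (case_bool (ennreal \<circ> X) (ennreal \<circ> Y)) UNIV"
    unfolding indep_var_def cb .
  from indep_vars_nn_integral[OF _ this]
  have "(\<integral>\<^sup>+\<omega>. (\<Prod>i\<in>UNIV. case_bool (ennreal \<circ> X) (ennreal \<circ> Y) i \<omega>) \<partial>M) = (\<Prod>i\<in>UNIV. \<integral>\<^sup>+\<omega>. (case_bool (ennreal \<circ> X) (ennreal \<circ> Y) i \<omega>) \<partial>M)"
    by (auto split: bool.split)
  thus ?thesis using assms(2,3) by (simp add: UNIV_bool mult.commute ennreal_mult comp_def)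
qed

theorem mainTheorem6:
  fixes M :: "'a measure"
    and A B :: "'a \<Rightarrow> real"
    and As Bs :: "nat \<Rightarrow> 'a \<Rightarrow> real"
    and X :: "'a \<Rightarrow> real"
    and r :: real
  assumes "prob_space M"
    and "A \<in> borel_measurable M" and "B \<in> borel_measurable M"
    and "\<And>n. n \<ge> 1 \<Longrightarrow> As n \<in> borel_measurable M"
    and "\<And>n. n \<ge> 1 \<Longrightarrow> Bs n \<in> borel_measurable M"
    and "prob_space.indep_vars M (\<lambda>_. borel) (\<lambda>n \<omega>. (As n \<omega>, Bs n \<omega>)) {1..}"
    and "\<And>n. n \<ge> 1 \<Longrightarrow>
           distr M borel (\<lambda>\<omega>. (As n \<omega>, Bs n \<omega>)) = distr M borel (\<lambda>\<omega>. (A \<omega>, B \<omega>))"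
    and "X \<in> borel_measurable M"
    and "AE \<omega> in M. (\<lambda>n. perp_partial As Bs n \<omega>) \<longlonglongrightarrow> X \<omega>"
    and "measure M {\<omega> \<in> space M. A \<omega> = -1} > 0"
    and "r > 0"
  shows "(\<integral>\<^sup>+ \<omega>. ennreal (exp (r * X \<omega>)) \<partial>M) < \<infinity> \<longleftrightarrow>
         (\<integral>\<^sup>+ \<omega>. ennreal (exp (r * \<bar>X \<omega>\<bar>)) \<partial>M) < \<infinity>"
proof -
  interpret P: prob_space M by fact
  define Z where "Z = (\<lambda>n \<omega>. (As n \<omega>, Bs n \<omega>))"
  have ind: "P.indep_vars (\<lambda>_. borel) Z {1..}" using assms(6) by (simp add: Z_def)
  have Zrv: "\<And>i. i \<ge> 1 \<Longrightarrow> Z i \<in> measurable M borel" using ind by (auto simp: P.indep_vars_def)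
  define D where "D = distr M borel (\<lambda>\<omega>. (A \<omega>, B \<omega>))"
  have ZD: "\<And>n. n\<ge>1 \<Longrightarrow> distr M borel (Z n) = D" using assms(7) by (simp add: Z_def D_def)
  have shift_indep: "P.indep_vars (\<lambda>_. borel) (\<lambda>i. Z (i + Suc m)) UNIV" for m
  proof -
    have "P.indep_vars (\<lambda>j. PiM {j + Suc m} (\<lambda>_. borel)) (\<lambda>j \<omega>. restrict (\<lambda>i. Z i \<omega>) {j + Suc m}) UNIV"
      by (rule P.indep_vars_restrict[OF ind]) (auto simp: disjoint_family_on_def)
    hence "P.indep_vars (\<lambda>_. borel) (\<lambda>j \<omega>. (\<lambda>f. f (j + Suc m)) (restrict (\<lambda>i. Z i \<omega>) {j + Suc m})) UNIV"
      by (rule P.indep_vars_compose2) (rule measurable_component_singleton, simp)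
    thus ?thesis by simp
  qed
  have lawW: "distr M (PiM UNIV (\<lambda>_. borel)) (\<lambda>\<omega>. \<lambda>i\<in>UNIV. Z (i + Suc m) \<omega>) = PiM UNIV (\<lambda>_. D)" for m
  proof -
    have "distr M (PiM UNIV (\<lambda>_. borel)) (\<lambda>\<omega>. \<lambda>i\<in>UNIV. Z (i + Suc m) \<omega>) = PiM UNIV (\<lambda>i. distr M borel (Z (i + Suc m)))"
      using P.indep_vars_iff_distr_eq_PiM'[where I=UNIV and M'="\<lambda>_. borel" and X="\<lambda>i. Z (i + Suc m)"] shift_indep[of m] Zrv by simp
    also have "\<dots> = PiM UNIV (\<lambda>_. D)" using ZD by simp
    finally show ?thesis .
  qed
  define W where "W = (\<lambda>\<omega>. \<lambda>i\<in>UNIV. Z (i + Suc 0) \<omega>)"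
  define W' where "W' = (\<lambda>\<omega>. \<lambda>i\<in>UNIV. Z (i + Suc 1) \<omega>)"
  have Wm: "W \<in> measurable M (PiM UNIV (\<lambda>_. borel))" unfolding W_def
    by (rule measurable_restrict) (rule Zrv, simp)
  have W'm: "W' \<in> measurable M (PiM UNIV (\<lambda>_. borel))" unfolding W'_def
    by (rule measurable_restrict) (rule Zrv, simp)
  define h where "h = (\<lambda>s. ennreal (exp (- r * Lf s)))"
  have hm: "h \<in> borel_measurable (PiM UNIV (\<lambda>_. borel))" unfolding h_def by measurable
  have hWW': "(\<integral>\<^sup>+\<omega>. h (W' \<omega>) \<partial>M) = (\<integral>\<^sup>+\<omega>. h (W \<omega>) \<partial>M)"
  proof -
    have "(\<integral>\<^sup>+\<omega>. h (W' \<omega>) \<partial>M) = (\<integral>\<^sup>+s. h s \<partial>distr M (PiM UNIV (\<lambda>_. borel)) W')"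
      by (simp add: nn_integral_distr[OF W'm] hm)
    also have "\<dots> = (\<integral>\<^sup>+s. h s \<partial>distr M (PiM UNIV (\<lambda>_. borel)) W)"
      unfolding W_def W'_def lawW ..
    also have "\<dots> = (\<integral>\<^sup>+\<omega>. h (W \<omega>) \<partial>M)"
      by (simp add: nn_integral_distr[OF Wm] hm)
    finally show ?thesis .
  qed
  have XW: "AE \<omega> in M. X \<omega> = Lf (W \<omega>)"
    using assms(9)
  proof eventually_elim
    case (elim \<omega>)
    then have "seqT (W \<omega>) \<longlonglongrightarrow> X \<omega>"
      by (simp add: perp_seqT W_def Z_def restrict_UNIV)
    then show ?case unfolding Lf_def by (simp add: limI)
  qed
  have hWX: "(\<integral>\<^sup>+\<omega>. h (W \<omega>) \<partial>M) = (\<integral>\<^sup>+\<omega>. ennreal (exp (- r * X \<omega>)) \<partial>M)"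
  proof (rule nn_integral_cong_AE)
    show "AE \<omega> in M. h (W \<omega>) = ennreal (exp (- r * X \<omega>))"
      using XW by eventually_elim (simp add: h_def)
  qed
  define g where "g = (\<lambda>f::nat \<Rightarrow> real\<times>real. of_bool (fst (f 1) = -1) * exp (r * snd (f 1)))"
  define h2 where "h2 = (\<lambda>f::nat \<Rightarrow> real\<times>real. exp (- r * Lf (\<lambda>i\<in>UNIV. f (i + Suc 1))))"
  have gm: "g \<in> borel_measurable (PiM {1} (\<lambda>_. borel))"
    unfolding g_def using fst_comp_measI[of 1 "{1}"] snd_comp_measI[of 1 "{1}"] by measurable
  have sh: "(\<lambda>f::nat \<Rightarrow> real\<times>real. \<lambda>i\<in>UNIV. f (i + Suc 1)) \<in> measurable (PiM {2..} (\<lambda>_. borel)) (PiM UNIV (\<lambda>_. borel))"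
    by (rule measurable_restrict) (rule measurable_component_singleton, simp)
  have h2m: "h2 \<in> borel_measurable (PiM {2..} (\<lambda>_. borel))"
    unfolding h2_def using measurable_compose[OF sh Lf_measurable] by measurable
  have iv: "P.indep_var borel (\<lambda>\<omega>. g (restrict (\<lambda>i. Z i \<omega>) {1})) borel (\<lambda>\<omega>. h2 (restrict (\<lambda>i. Z i \<omega>) {2..}))"
    using P.indep_var_compose[OF P.indep_var_restrict[OF ind, of "{1}" "{2..}"] gm h2m] by (simp add: comp_def)
  have gZ: "\<And>\<omega>. g (restrict (\<lambda>i. Z i \<omega>) {1}) = of_bool (As 1 \<omega> = -1) * exp (r * Bs 1 \<omega>)"
    by (simp add: g_def Z_def)
  have hZ: "\<And>\<omega>. h2 (restrict (\<lambda>i. Z i \<omega>) {2..}) = exp (- r * Lf (W' \<omega>))"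
    by (simp add: h2_def W'_def)
  define c where "c = (\<integral>\<^sup>+\<omega>. ennreal (of_bool (As 1 \<omega> = -1) * exp (r * Bs 1 \<omega>)) \<partial>M)"
  have prodeq: "(\<integral>\<^sup>+\<omega>. ennreal (of_bool (As 1 \<omega> = -1) * exp (r * Bs 1 \<omega>) * exp (- r * Lf (W' \<omega>))) \<partial>M)
      = c * (\<integral>\<^sup>+\<omega>. h (W' \<omega>) \<partial>M)"
    using P.indep_var_nn_integral_mult[OF iv] unfolding gZ hZ h_def c_def by simp
  have lower: "AE \<omega> in M. ennreal (of_bool (As 1 \<omega> = -1) * exp (r * Bs 1 \<omega>) * exp (- r * Lf (W' \<omega>))) \<le> ennreal (exp (r * X \<omega>))"
    using assms(9)
  proof eventually_elim
    case (elim \<omega>)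
    show ?case
    proof (cases "As 1 \<omega> = -1")
      case True
      have cv: "seqT (W \<omega>) \<longlonglongrightarrow> X \<omega>"
        using elim by (simp add: perp_seqT W_def Z_def restrict_UNIV)
      have "X \<omega> = Bs 1 \<omega> - Lf (\<lambda>i. W \<omega> (Suc i))"
        using Lf_shift[OF _ cv] True by (simp add: W_def Z_def)
      moreover have "(\<lambda>i. W \<omega> (Suc i)) = W' \<omega>" by (simp add: W_def W'_def fun_eq_iff)
      ultimately have "X \<omega> = Bs 1 \<omega> - Lf (W' \<omega>)" by simp
      then have e: "r * X \<omega> = r * Bs 1 \<omega> + - r * Lf (W' \<omega>)" by (simp add: right_diff_distrib)
      have "exp (r * Bs 1 \<omega>) * exp (- r * Lf (W' \<omega>)) = exp (r * X \<omega>)"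
        unfolding e by (simp only: exp_add)
      then show ?thesis using True by simp
    next
      case False then show ?thesis by simp
    qed
  qed
  have Xm[measurable]: "X \<in> borel_measurable M" by fact
  have ge: "c * (\<integral>\<^sup>+\<omega>. ennreal (exp (- r * X \<omega>)) \<partial>M) \<le> (\<integral>\<^sup>+\<omega>. ennreal (exp (r * X \<omega>)) \<partial>M)"
    using nn_integral_mono_AE[OF lower] prodeq hWW' hWX by simp
  have cpos: "c \<noteq> 0"
  proof
    assume "c = 0"
    moreover have "(\<lambda>\<omega>. ennreal (of_bool (As 1 \<omega> = -1) * exp (r * Bs 1 \<omega>))) \<in> borel_measurable M"
      using assms(4,5)[of 1] by measurable
    ultimately have "AE \<omega> in M. ennreal (of_bool (As 1 \<omega> = -1) * exp (r * Bs 1 \<omega>)) = 0"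
      unfolding c_def by (simp add: nn_integral_0_iff_AE)
    hence "AE \<omega> in M. As 1 \<omega> \<noteq> -1" by eventually_elim (auto simp: of_bool_def split: if_splits)
    moreover have "{\<omega>\<in>space M. As 1 \<omega> = -1} \<in> sets M" using assms(4)[of 1] by measurable
    ultimately have e0: "emeasure M {\<omega>\<in>space M. As 1 \<omega> = -1} = 0"
      by (subst (asm) AE_iff_measurable[OF _ refl]) auto
    have S: "({-1} \<times> UNIV :: (real \<times> real) set) \<in> sets borel"
      by (rule borel_closed[OF closed_Times[OF closed_singleton closed_UNIV]])
    have "emeasure M {\<omega>\<in>space M. As 1 \<omega> = -1} = emeasure (distr M borel (Z 1)) ({-1} \<times> UNIV)"
      by (subst emeasure_distr[OF Zrv S]) (auto simp: Z_def intro!: arg_cong[where f="emeasure M"])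
    also have "\<dots> = emeasure D ({-1} \<times> UNIV)" using ZD[of 1] by simp
    also have "\<dots> = emeasure M {\<omega>\<in>space M. A \<omega> = -1}" unfolding D_def
      by (subst emeasure_distr[OF _ S]) (use assms(2,3) in \<open>auto intro!: arg_cong[where f="emeasure M"]\<close>)
    finally have "emeasure M {\<omega>\<in>space M. A \<omega> = -1} = 0" using e0 by simp
    hence "measure M {\<omega>\<in>space M. A \<omega> = -1} = 0" by (simp add: measure_def)
    thus False using assms(10) by simp
  qed
  have pw: "ennreal (exp (r * \<bar>x\<bar>)) \<le> ennreal (exp (r * x)) + ennreal (exp (- r * x))" for x :: real
  proof -
    have "exp (r * \<bar>x\<bar>) \<le> exp (r * x) + exp (- r * x)"
      by (cases "x \<ge> 0") (auto simp: add_increasing add_increasing2)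
    thus ?thesis by (simp add: ennreal_plus[symmetric] del: ennreal_plus)
  qed
  show ?thesis
  proof
    assume fin: "(\<integral>\<^sup>+\<omega>. ennreal (exp (r * X \<omega>)) \<partial>M) < \<infinity>"
    have "c * (\<integral>\<^sup>+\<omega>. ennreal (exp (- r * X \<omega>)) \<partial>M) < \<infinity>" using ge fin by (rule le_less_trans)
    hence fin2: "(\<integral>\<^sup>+\<omega>. ennreal (exp (- r * X \<omega>)) \<partial>M) < \<infinity>" using cpos
      by (auto simp: ennreal_mult_less_top)
    have "(\<integral>\<^sup>+\<omega>. ennreal (exp (r * \<bar>X \<omega>\<bar>)) \<partial>M) \<le> (\<integral>\<^sup>+\<omega>. ennreal (exp (r * X \<omega>)) + ennreal (exp (- r * X \<omega>)) \<partial>M)"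
      by (rule nn_integral_mono) (rule pw)
    also have "\<dots> = (\<integral>\<^sup>+\<omega>. ennreal (exp (r * X \<omega>)) \<partial>M) + (\<integral>\<^sup>+\<omega>. ennreal (exp (- r * X \<omega>)) \<partial>M)"
      by (rule nn_integral_add) measurable
    also have "\<dots> < \<infinity>" using fin fin2 by (simp add: ennreal_add_less_top)
    finally show "(\<integral>\<^sup>+\<omega>. ennreal (exp (r * \<bar>X \<omega>\<bar>)) \<partial>M) < \<infinity>" .
  next
    assume fin: "(\<integral>\<^sup>+\<omega>. ennreal (exp (r * \<bar>X \<omega>\<bar>)) \<partial>M) < \<infinity>"
    have "(\<integral>\<^sup>+\<omega>. ennreal (exp (r * X \<omega>)) \<partial>M) \<le> (\<integral>\<^sup>+\<omega>. ennreal (exp (r * \<bar>X \<omega>\<bar>)) \<partial>M)"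
      by (rule nn_integral_mono) (use assms(11) in \<open>simp add: mult_left_mono\<close>)
    thus "(\<integral>\<^sup>+\<omega>. ennreal (exp (r * X \<omega>)) \<partial>M) < \<infinity>" using fin by (rule le_less_trans)
  qed
qed

end
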